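(* Let $G$ be a group with a subgroup $\Gamma$ of index $m$ and a subgroup $H\lhd\Gamma$ of cardinality $d$ such that $\Gamma/H$ is abelian, and let $F=(F_n)_{n=1}^\infty$ be a left-Følner sequence for $G$. Then $\textup{cr}_F(G)\ge\frac{1}{m^2d}$.
   Context: $F$ is a left-Følner sequence if each $F_n$ is a finite subset of $G$ and $|xF_n\triangle F_n|/|F_n|\to0$ for every $x\in G$. With $\mathcal{C}(G)$ the set of conjugacy classes of $G$, $\textup{cr}_F(G)=\limsup_{n\to\infty}\frac{|\{C\in\mathcal{C}(G):C\cap F_n\ne\varnothing\}|}{|F_n|}$. *)

theory Defs
  imports "HOL-Algebra.Algebra" "HOL-Analysis.Analysis"
begin

definition conj_class :: "('a, 'b) monoid_scheme \<Rightarrow> 'a \<Rightarrow> 'a set" where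
  "conj_class G x = {g \<otimes>\<^bsub>G\<^esub> x \<otimes>\<^bsub>G\<^esub> inv\<^bsub>G\<^esub> g | g. g \<in> carrier G}"

definition conj_classes :: "('a, 'b) monoid_scheme \<Rightarrow> 'a set set" where
  "conj_classes G = conj_class G ` carrier G"

definition left_Folner :: "('a, 'b) monoid_scheme \<Rightarrow> (nat \<Rightarrow> 'a set) \<Rightarrow> bool" where
  "left_Folner G F \<longleftrightarrow>
     (\<forall>n. finite (F n) \<and> F n \<noteq> {} \<and> F n \<subseteq> carrier G) \<and>
     (\<forall>x\<in>carrier G.
        (\<lambda>n. real (card (((x <#\<^bsub>G\<^esub> F n) - F n) \<union> (F n - (x <#\<^bsub>G\<^esub> F n))))
              / real (card (F n))) \<longlonglongrightarrow> 0)"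

definition commuting_ratio :: "('a, 'b) monoid_scheme \<Rightarrow> (nat \<Rightarrow> 'a set) \<Rightarrow> ereal" where
  "commuting_ratio G F =
     limsup (\<lambda>n. ereal (real (card {C \<in> conj_classes G. C \<inter> F n \<noteq> {}}) / real (card (F n))))"

end

theory Submission
  imports Defs
begin

lemma rcoset_upd: "r_coset (G\<lparr>carrier := S\<rparr>) = r_coset G"
  by (auto simp: r_coset_def fun_eq_iff)

lemma setmult_upd: "set_mult (G\<lparr>carrier := S\<rparr>) = set_mult G"
  by (auto simp: set_mult_def fun_eq_iff)

lemma (in group) inv_cancel_left': "x \<in> carrier G \<Longrightarrow> y \<in> carrier G \<Longrightarrow> inv x \<otimes> (x \<otimes> y) = y"
  by (simp add: m_assoc[symmetric])

lemma (in group) inv_cancel_left'': "x \<in> carrier G \<Longrightarrow> y \<in> carrier G \<Longrightarrow> x \<otimes> (inv x \<otimes> y) = y"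
  by (simp add: m_assoc[symmetric])

lemma comm_H:
  fixes G :: "('a, 'b) monoid_scheme" (structure)
  assumes grp: "group G" and sg: "subgroup \<Gamma> G"
    and nH: "normal H (G\<lparr>carrier := \<Gamma>\<rparr>)"
    and cg: "comm_group ((G\<lparr>carrier := \<Gamma>\<rparr>) Mod H)"
    and gam: "\<gamma> \<in> \<Gamma>" and y: "y \<in> \<Gamma>"
  shows "\<gamma> \<otimes>\<^bsub>G\<^esub> y \<otimes>\<^bsub>G\<^esub> inv\<^bsub>G\<^esub> \<gamma> \<in> H #>\<^bsub>G\<^esub> y"
proof -
  interpret G: group G by fact
  let ?G' = "G\<lparr>carrier := \<Gamma>\<rparr>"
  interpret G': group ?G' using G.subgroup_imp_group[OF sg] .
  interpret N: normal H ?G' by fact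
  have HG: "subgroup H G"
    using G.incl_subgroup[OF sg N.subgroup_axioms] .
  have HS: "H \<subseteq> \<Gamma>" using N.subset by simp
  have gG: "\<gamma> \<in> carrier G" "y \<in> carrier G" using gam y subgroup.mem_carrier[OF sg] by auto
  have e1: "(H #>\<^bsub>?G'\<^esub> \<gamma>) <#>\<^bsub>?G'\<^esub> (H #>\<^bsub>?G'\<^esub> y) = H #>\<^bsub>?G'\<^esub> (\<gamma> \<otimes>\<^bsub>G\<^esub> y)"
    using N.rcos_sum[of \<gamma> y] gam y by simp
  have e2: "(H #>\<^bsub>?G'\<^esub> y) <#>\<^bsub>?G'\<^esub> (H #>\<^bsub>?G'\<^esub> \<gamma>) = H #>\<^bsub>?G'\<^esub> (y \<otimes>\<^bsub>G\<^esub> \<gamma>)"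
    using N.rcos_sum[of y \<gamma>] gam y by simp
  have c1: "H #>\<^bsub>?G'\<^esub> \<gamma> \<in> carrier (?G' Mod H)" "H #>\<^bsub>?G'\<^esub> y \<in> carrier (?G' Mod H)"
    unfolding FactGroup_def using G'.rcosetsI[of H] HS gam y by auto
  have "(H #>\<^bsub>?G'\<^esub> \<gamma>) <#>\<^bsub>?G'\<^esub> (H #>\<^bsub>?G'\<^esub> y) = (H #>\<^bsub>?G'\<^esub> y) <#>\<^bsub>?G'\<^esub> (H #>\<^bsub>?G'\<^esub> \<gamma>)"
    using comm_monoid.m_comm[OF comm_group.axioms(1)[OF cg] c1] by (simp add: FactGroup_def)
  hence eq: "H #>\<^bsub>G\<^esub> (\<gamma> \<otimes>\<^bsub>G\<^esub> y) = H #>\<^bsub>G\<^esub> (y \<otimes>\<^bsub>G\<^esub> \<gamma>)"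
    using e1 e2 by (simp add: rcoset_upd)
  have "\<gamma> \<otimes>\<^bsub>G\<^esub> y \<in> H #>\<^bsub>G\<^esub> (y \<otimes>\<^bsub>G\<^esub> \<gamma>)"
    using G.rcos_self[OF _ HG, of "\<gamma> \<otimes>\<^bsub>G\<^esub> y"] gG eq by simp
  then obtain h where h: "h \<in> H" "\<gamma> \<otimes>\<^bsub>G\<^esub> y = h \<otimes>\<^bsub>G\<^esub> (y \<otimes>\<^bsub>G\<^esub> \<gamma>)"
    unfolding r_coset_def by auto
  have hG: "h \<in> carrier G" using subgroup.mem_carrier[OF HG h(1)] .
  have "\<gamma> \<otimes>\<^bsub>G\<^esub> y \<otimes>\<^bsub>G\<^esub> inv\<^bsub>G\<^esub> \<gamma> = h \<otimes>\<^bsub>G\<^esub> (y \<otimes>\<^bsub>G\<^esub> \<gamma>) \<otimes>\<^bsub>G\<^esub> inv\<^bsub>G\<^esub> \<gamma>"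
    by (simp only: h(2))
  also have "\<dots> = h \<otimes>\<^bsub>G\<^esub> y"
    using gG hG by (simp add: G.m_assoc)
  finally have "\<gamma> \<otimes>\<^bsub>G\<^esub> y \<otimes>\<^bsub>G\<^esub> inv\<^bsub>G\<^esub> \<gamma> = h \<otimes>\<^bsub>G\<^esub> y" .
  thus ?thesis using h(1) unfolding r_coset_def by auto
qed


lemma conj_class_same:
  fixes G :: "('a, 'b) monoid_scheme" (structure)
  assumes grp: "group G" and z: "z \<in> carrier G" and y: "y \<in> conj_class G z"
  shows "conj_class G y = conj_class G z"
proof -
  interpret G: group G by fact
  obtain g where g: "g \<in> carrier G" "y = g \<otimes> z \<otimes> inv g"
    using y unfolding conj_class_def by auto
  show ?thesis
  proof
    show "conj_class G y \<subseteq> conj_class G z"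
    proof
      fix w assume "w \<in> conj_class G y"
      then obtain k where k: "k \<in> carrier G" "w = k \<otimes> y \<otimes> inv k"
        unfolding conj_class_def by auto
      have "w = (k \<otimes> g) \<otimes> z \<otimes> inv (k \<otimes> g)"
        using k g z by (simp add: G.m_assoc G.inv_mult_group G.inv_cancel_left' G.inv_cancel_left'')
      thus "w \<in> conj_class G z" unfolding conj_class_def using k g by blast
    qed
  next
    show "conj_class G z \<subseteq> conj_class G y"
    proof
      fix w assume "w \<in> conj_class G z"
      then obtain k where k: "k \<in> carrier G" "w = k \<otimes> z \<otimes> inv k"
        unfolding conj_class_def by auto
      have "w = (k \<otimes> inv g) \<otimes> y \<otimes> inv (k \<otimes> inv g)"
        using k g z by (simp add: G.m_assoc G.inv_mult_group G.inv_cancel_left' G.inv_cancel_left'')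
      thus "w \<in> conj_class G y" unfolding conj_class_def using k g by blast
    qed
  qed
qed

lemma conj_class_self:
  fixes G :: "('a, 'b) monoid_scheme" (structure)
  assumes grp: "group G" and z: "z \<in> carrier G"
  shows "z \<in> conj_class G z"
proof -
  interpret G: group G by fact
  have "z = \<one> \<otimes> z \<otimes> inv \<one>" using z by simp
  thus ?thesis unfolding conj_class_def by blast
qed

lemma class_bound:
  fixes G :: "('a, 'b) monoid_scheme" (structure)
  assumes grp: "group G" and sg: "subgroup \<Gamma> G"
    and nH: "normal H (G\<lparr>carrier := \<Gamma>\<rparr>)"
    and cg: "comm_group ((G\<lparr>carrier := \<Gamma>\<rparr>) Mod H)"
    and fr: "finite (rcosets\<^bsub>G\<^esub> \<Gamma>)" and fH: "finite H"
    and x0: "x0 \<in> \<Gamma>"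
  shows "finite (conj_class G x0 \<inter> \<Gamma>) \<and> card (conj_class G x0 \<inter> \<Gamma>) \<le> card (rcosets\<^bsub>G\<^esub> \<Gamma>) * card H"
proof -
  interpret G: group G by fact
  let ?G' = "G\<lparr>carrier := \<Gamma>\<rparr>"
  interpret N: normal H ?G' by fact
  have HG: "subgroup H G" using G.incl_subgroup[OF sg N.subgroup_axioms] .
  have HC: "H \<subseteq> carrier G" using subgroup.subset[OF HG] .
  have GC: "\<Gamma> \<subseteq> carrier G" using subgroup.subset[OF sg] .
  have x0G: "x0 \<in> carrier G" using x0 GC by blast
  define S where "S R = {g \<otimes> x0 \<otimes> inv g | g. g \<in> R} \<inter> \<Gamma>" for R
  have sub: "conj_class G x0 \<inter> \<Gamma> \<subseteq> (\<Union>R\<in>rcosets \<Gamma>. S R)"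
  proof
    fix w assume w: "w \<in> conj_class G x0 \<inter> \<Gamma>"
    then obtain g where g: "g \<in> carrier G" "w = g \<otimes> x0 \<otimes> inv g"
      unfolding conj_class_def by auto
    have "g \<in> \<Gamma> #> g" using G.rcos_self[OF g(1) sg] .
    moreover have "\<Gamma> #> g \<in> rcosets \<Gamma>" using G.rcosetsI[OF GC g(1)] .
    ultimately show "w \<in> (\<Union>R\<in>rcosets \<Gamma>. S R)" unfolding S_def using g w by blast
  qed
  have SR: "finite (S R) \<and> card (S R) \<le> card H" if R: "R \<in> rcosets \<Gamma>" for R
  proof (cases "S R = {}")
    case True then show ?thesis by simp
  next
    case False
    then obtain g0 where g0: "g0 \<in> R" "g0 \<otimes> x0 \<otimes> inv g0 \<in> \<Gamma>" unfolding S_def by auto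
    obtain a where a: "a \<in> carrier G" "R = \<Gamma> #> a" using R unfolding RCOSETS_def by auto
    have g0G: "g0 \<in> carrier G" using g0(1) a G.r_coset_subset_G[OF GC a(1)] by blast
    have R': "R = \<Gamma> #> g0" using G.repr_independence[of g0 \<Gamma> a] g0(1) a sg by simp
    let ?y = "g0 \<otimes> x0 \<otimes> inv g0"
    have "S R \<subseteq> H #> ?y"
    proof
      fix w assume "w \<in> S R"
      then obtain g where g: "g \<in> R" "w = g \<otimes> x0 \<otimes> inv g" unfolding S_def by auto
      then obtain \<gamma> where ga: "\<gamma> \<in> \<Gamma>" "g = \<gamma> \<otimes> g0" using R' unfolding r_coset_def by auto
      have gaG: "\<gamma> \<in> carrier G" using ga GC by blast
      have "w = \<gamma> \<otimes> ?y \<otimes> inv \<gamma>"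
        using g ga gaG g0G x0G by (simp add: G.m_assoc G.inv_mult_group G.inv_cancel_left' G.inv_cancel_left'')
      thus "w \<in> H #> ?y" using comm_H[OF grp sg nH cg ga(1) g0(2)] by simp
    qed
    moreover have "?y \<in> carrier G" using g0G x0G by simp
    moreover have "H #> ?y \<in> rcosets H" using G.rcosetsI[OF HC] calculation(2) .
    ultimately show ?thesis
      using G.rcosets_finite[OF _ HC fH] G.card_rcosets_equal[OF _ HC]
      by (metis card_mono finite_subset)
  qed
  have fin: "finite (\<Union>R\<in>rcosets \<Gamma>. S R)" using fr SR by blast
  have "card (conj_class G x0 \<inter> \<Gamma>) \<le> card (\<Union>R\<in>rcosets \<Gamma>. S R)"
    using card_mono[OF fin sub] .
  also have "\<dots> \<le> (\<Sum>R\<in>rcosets \<Gamma>. card (S R))" using card_UN_le[OF fr] .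
  also have "\<dots> \<le> card (rcosets \<Gamma>) * card H"
    using sum_bounded_above[of "rcosets \<Gamma>" "\<lambda>R. card (S R)" "card H"] SR by simp
  finally show ?thesis using finite_subset[OF sub fin] by simp
qed


lemma count_bound:
  fixes G :: "('a, 'b) monoid_scheme" (structure)
  assumes grp: "group G" and sg: "subgroup \<Gamma> G"
    and nH: "normal H (G\<lparr>carrier := \<Gamma>\<rparr>)"
    and cg: "comm_group ((G\<lparr>carrier := \<Gamma>\<rparr>) Mod H)"
    and fr: "finite (rcosets\<^bsub>G\<^esub> \<Gamma>)" and fH: "finite H"
    and fF: "finite F" and FC: "F \<subseteq> carrier G"
  shows "card (F \<inter> \<Gamma>) \<le> card (rcosets \<Gamma>) * card H * card {C \<in> conj_classes G. C \<inter> F \<noteq> {}}"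
proof -
  interpret G: group G by fact
  let ?K = "{C \<in> conj_classes G. C \<inter> F \<noteq> {}}"
  let ?A = "F \<inter> \<Gamma>"
  have GC: "\<Gamma> \<subseteq> carrier G" using subgroup.subset[OF sg] .
  have K1: "?K \<subseteq> conj_class G ` F"
  proof
    fix C assume "C \<in> ?K"
    then obtain z w where z: "z \<in> carrier G" "C = conj_class G z" "w \<in> C" "w \<in> F"
      unfolding conj_classes_def by auto
    hence "C = conj_class G w" using conj_class_same[OF grp z(1)] by simp
    thus "C \<in> conj_class G ` F" using z(4) by blast
  qed
  have fK: "finite ?K" using finite_subset[OF K1] fF by blast
  have K2: "conj_class G ` ?A \<subseteq> ?K"
  proof
    fix C assume "C \<in> conj_class G ` ?A"
    then obtain x where x: "x \<in> ?A" "C = conj_class G x" by blast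
    have xG: "x \<in> carrier G" using x(1) FC by blast
    have "x \<in> C" using conj_class_self[OF grp xG] x(2) by simp
    thus "C \<in> ?K" using x xG unfolding conj_classes_def by blast
  qed
  have sub: "?A \<subseteq> (\<Union>C\<in>conj_class G ` ?A. C \<inter> \<Gamma>)"
  proof
    fix x assume x: "x \<in> ?A"
    have xG: "x \<in> carrier G" using x FC by blast
    show "x \<in> (\<Union>C\<in>conj_class G ` ?A. C \<inter> \<Gamma>)"
      using conj_class_self[OF grp xG] x by blast
  qed
  have fA: "finite ?A" using fF by simp
  have bd: "finite (C \<inter> \<Gamma>) \<and> card (C \<inter> \<Gamma>) \<le> card (rcosets \<Gamma>) * card H"
    if "C \<in> conj_class G ` ?A" for C
    using that class_bound[OF grp sg nH cg fr fH] by auto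
  have "card ?A \<le> (\<Sum>C\<in>conj_class G ` ?A. card (C \<inter> \<Gamma>))"
    using card_mono[OF _ sub] card_UN_le[of "conj_class G ` ?A" "\<lambda>C. C \<inter> \<Gamma>"] fA bd
    by (meson finite_UN_I finite_imageI le_trans)
  also have "\<dots> \<le> card (conj_class G ` ?A) * (card (rcosets \<Gamma>) * card H)"
    using sum_bounded_above[of "conj_class G ` ?A" "\<lambda>C. card (C \<inter> \<Gamma>)"] bd by simp
  also have "\<dots> \<le> card ?K * (card (rcosets \<Gamma>) * card H)"
    using card_mono[OF fK K2] by simp
  finally show ?thesis by (simp add: mult.commute mult.left_commute)
qed

lemma coset_bound:
  fixes G :: "('a, 'b) monoid_scheme" (structure)
  assumes grp: "group G" and sg: "subgroup \<Gamma> G"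
    and fr: "finite (rcosets\<^bsub>G\<^esub> \<Gamma>)"
    and fF: "finite F" and FC: "F \<subseteq> carrier G"
    and rep: "\<And>R. R \<in> rcosets \<Gamma> \<Longrightarrow> a R \<in> carrier G \<and> R = \<Gamma> #> a R"
  shows "card F \<le> card (rcosets \<Gamma>) * card (F \<inter> \<Gamma>) + (\<Sum>R\<in>rcosets \<Gamma>. card ((a R <# F) - F))"
proof -
  interpret G: group G by fact
  have GC: "\<Gamma> \<subseteq> carrier G" using subgroup.subset[OF sg] .
  define P where "P R = {y \<in> F. inv y \<in> R}" for R
  have cov: "F \<subseteq> (\<Union>R\<in>rcosets \<Gamma>. P R)"
  proof
    fix y assume y: "y \<in> F"
    have yG0: "y \<in> carrier G" using y FC by blast
    have yG: "inv y \<in> carrier G" using G.inv_closed[OF yG0] .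
    have "inv y \<in> \<Gamma> #> inv y" using G.rcos_self[OF yG sg] .
    moreover have "\<Gamma> #> inv y \<in> rcosets \<Gamma>" using G.rcosetsI[OF GC yG] .
    ultimately show "y \<in> (\<Union>R\<in>rcosets \<Gamma>. P R)" unfolding P_def using y by blast
  qed
  have PR: "card (P R) \<le> card (F \<inter> \<Gamma>) + card ((a R <# F) - F)" if R: "R \<in> rcosets \<Gamma>" for R
  proof -
    obtain b where b: "b = a R" by simp
    have aG: "b \<in> carrier G" and Ra: "R = \<Gamma> #> b" using rep[OF R] b by auto
    have inj: "inj_on (\<lambda>y. b \<otimes> y) (P R)"
    proof (rule inj_onI)
      fix x y assume x: "x \<in> P R" and y: "y \<in> P R" and e: "b \<otimes> x = b \<otimes> y"
      have xG: "x \<in> carrier G" using x FC unfolding P_def by blast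
      have yG: "y \<in> carrier G" using y FC unfolding P_def by blast
      have "x = inv (b) \<otimes> (b \<otimes> x)" using G.inv_cancel_left'[OF aG xG] by simp
      also have "\<dots> = inv (b) \<otimes> (b \<otimes> y)" using e by simp
      also have "\<dots> = y" using G.inv_cancel_left'[OF aG yG] by simp
      finally show "x = y" .
    qed
    have img: "(\<lambda>y. b \<otimes> y) ` P R \<subseteq> (F \<inter> \<Gamma>) \<union> ((b <# F) - F)"
    proof
      fix w assume "w \<in> (\<lambda>y. b \<otimes> y) ` P R"
      then obtain y where y: "y \<in> F" "inv y \<in> R" "w = b \<otimes> y"
        unfolding P_def by auto
      have "inv y \<in> \<Gamma> #> b" using y(2) Ra by simp
      obtain \<gamma> where ga: "\<gamma> \<in> \<Gamma>" "inv y = \<gamma> \<otimes> b" using \<open>inv y \<in> \<Gamma> #> b\<close> unfolding r_coset_def by auto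
      have yG: "y \<in> carrier G" using y FC by blast
      have gG: "\<gamma> \<in> carrier G" using ga GC by blast
      have "y = inv (\<gamma> \<otimes> b)" using ga(2) yG by (metis G.inv_inv)
      hence "w = inv \<gamma>" using y(3) aG gG by (simp add: G.inv_mult_group G.m_assoc[symmetric])
      hence wg: "w \<in> \<Gamma>" using ga(1) subgroup.m_inv_closed[OF sg] by simp
      have "w \<in> b <# F" using y unfolding l_coset_def by blast
      thus "w \<in> (F \<inter> \<Gamma>) \<union> ((b <# F) - F)" using wg by blast
    qed
    have fin2: "finite ((F \<inter> \<Gamma>) \<union> ((b <# F) - F))"
      using fF unfolding l_coset_def by auto
    have "card (P R) = card ((\<lambda>y. b \<otimes> y) ` P R)" using card_image[OF inj] by simp
    also have "\<dots> \<le> card ((F \<inter> \<Gamma>) \<union> ((b <# F) - F))" using card_mono[OF fin2 img] .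
    also have "\<dots> \<le> card (F \<inter> \<Gamma>) + card ((b <# F) - F)" using card_Un_le .
    finally show ?thesis using b by simp
  qed
  have finP: "finite (\<Union>R\<in>rcosets \<Gamma>. P R)" using fr fF unfolding P_def by auto
  have "card F \<le> card (\<Union>R\<in>rcosets \<Gamma>. P R)" using card_mono[OF finP cov] .
  also have "\<dots> \<le> (\<Sum>R\<in>rcosets \<Gamma>. card (P R))" using card_UN_le[OF fr] .
  also have "\<dots> \<le> (\<Sum>R\<in>rcosets \<Gamma>. card (F \<inter> \<Gamma>) + card ((a R <# F) - F))"
    by (intro sum_mono PR)
  also have "\<dots> = card (rcosets \<Gamma>) * card (F \<inter> \<Gamma>) + (\<Sum>R\<in>rcosets \<Gamma>. card ((a R <# F) - F))"
    by (simp add: sum.distrib)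
  finally show ?thesis .
qed


theorem proposition1p25:
  fixes G :: "('a, 'b) monoid_scheme" and \<Gamma> H :: "'a set" and F :: "nat \<Rightarrow> 'a set"
    and m d :: nat
  assumes "group G"
    and "subgroup \<Gamma> G"
    and "finite (rcosets\<^bsub>G\<^esub> \<Gamma>)" and "card (rcosets\<^bsub>G\<^esub> \<Gamma>) = m"
    and "normal H (G\<lparr>carrier := \<Gamma>\<rparr>)"
    and "finite H" and "card H = d"
    and "comm_group ((G\<lparr>carrier := \<Gamma>\<rparr>) Mod H)"
    and "left_Folner G F"
  shows "commuting_ratio G F \<ge> ereal (1 / (real m ^ 2 * real d))"
proof -
  note grp = assms(1) and sg = assms(2) and fr = assms(3) and mdef = assms(4)
    and nH = assms(5) and fH = assms(6) and ddef = assms(7) and cg = assms(8) and fol = assms(9)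
  interpret G: group G by fact
  interpret N: normal H "G\<lparr>carrier := \<Gamma>\<rparr>" by fact
  have GC: "\<Gamma> \<subseteq> carrier G" using subgroup.subset[OF sg] .
  have "\<Gamma> #>\<^bsub>G\<^esub> \<one>\<^bsub>G\<^esub> \<in> rcosets\<^bsub>G\<^esub> \<Gamma>" using G.rcosetsI[OF GC G.one_closed] .
  hence mpos: "m > 0" using fr mdef card_gt_0_iff by blast
  have "\<one>\<^bsub>G\<lparr>carrier := \<Gamma>\<rparr>\<^esub> \<in> H" using subgroup.one_closed[OF N.subgroup_axioms] .
  hence dpos: "d > 0" using fH ddef card_gt_0_iff by auto
  define a where "a R = (SOME x. x \<in> carrier G \<and> R = \<Gamma> #>\<^bsub>G\<^esub> x)" for R
  have rep: "a R \<in> carrier G \<and> R = \<Gamma> #>\<^bsub>G\<^esub> a R" if "R \<in> rcosets\<^bsub>G\<^esub> \<Gamma>" for R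
  proof -
    have "\<exists>x. x \<in> carrier G \<and> R = \<Gamma> #>\<^bsub>G\<^esub> x" using that unfolding RCOSETS_def by auto
    thus ?thesis unfolding a_def by (rule someI_ex)
  qed
  have Fn: "finite (F n) \<and> F n \<noteq> {} \<and> F n \<subseteq> carrier G" for n
    using fol unfolding left_Folner_def by blast
  have cFpos: "card (F n) > 0" for n using Fn[of n] card_gt_0_iff by blast
  define e where "e R n = real (card ((a R <#\<^bsub>G\<^esub> F n) - F n)) / real (card (F n))" for R n
  define E where "E n = (\<Sum>R\<in>rcosets\<^bsub>G\<^esub> \<Gamma>. e R n)" for n
  have e0: "(\<lambda>n. e R n) \<longlonglongrightarrow> 0" if R: "R \<in> rcosets\<^bsub>G\<^esub> \<Gamma>" for R
  proof (rule tendsto_sandwich[where f="\<lambda>n. 0"])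
    have aG: "a R \<in> carrier G" using rep[OF R] by blast
    let ?h = "\<lambda>n. real (card (((a R <#\<^bsub>G\<^esub> F n) - F n) \<union> (F n - (a R <#\<^bsub>G\<^esub> F n))))
              / real (card (F n))"
    show "?h \<longlonglongrightarrow> 0" using fol aG unfolding left_Folner_def by blast
    show "\<forall>\<^sub>F n in sequentially. 0 \<le> e R n" unfolding e_def by simp
    show "\<forall>\<^sub>F n in sequentially. e R n \<le> ?h n"
    proof (rule always_eventually, rule allI)
      fix n
      have fin: "finite (((a R <#\<^bsub>G\<^esub> F n) - F n) \<union> (F n - (a R <#\<^bsub>G\<^esub> F n)))"
        using Fn[of n] unfolding l_coset_def by auto
      have "card ((a R <#\<^bsub>G\<^esub> F n) - F n) \<le> card (((a R <#\<^bsub>G\<^esub> F n) - F n) \<union> (F n - (a R <#\<^bsub>G\<^esub> F n)))"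
        using card_mono[OF fin] by blast
      thus "e R n \<le> ?h n" unfolding e_def using cFpos[of n]
        by (simp add: divide_right_mono)
    qed
  qed simp
  have E0: "E \<longlonglongrightarrow> 0" unfolding E_def using e0 by (rule tendsto_null_sum)
  define c where "c = 1 / (real m ^ 2 * real d)"
  define r where "r n = real (card {C \<in> conj_classes G. C \<inter> F n \<noteq> {}}) / real (card (F n))" for n
  have key: "(1 - E n) * c \<le> r n" for n
  proof -
    let ?k = "card {C \<in> conj_classes G. C \<inter> F n \<noteq> {}}"
    let ?A = "card (F n \<inter> \<Gamma>)"
    let ?S = "(\<Sum>R\<in>rcosets\<^bsub>G\<^esub> \<Gamma>. card ((a R <#\<^bsub>G\<^esub> F n) - F n))"
    have c1: "?A \<le> m * d * ?k"
      using count_bound[OF grp sg nH cg fr fH, of "F n"] Fn[of n] mdef ddef by simp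
    have c2: "card (F n) \<le> m * ?A + ?S"
      using coset_bound[OF grp sg fr, of "F n" a] Fn[of n] rep mdef by simp
    have "card (F n) \<le> m * (m * d * ?k) + ?S" using c1 c2
      by (meson add_le_mono1 le_trans mult_le_mono2)
    hence R0: "real (card (F n)) \<le> real (m * (m * d * ?k) + ?S)" by (rule of_nat_mono)
    hence R1: "real (card (F n)) \<le> real m ^ 2 * real d * real ?k + real ?S"
      by (simp add: power2_eq_square mult.assoc)
    have ES: "E n = real ?S / real (card (F n))"
      unfolding E_def e_def by (simp add: sum_divide_distrib)
    have cF: "real (card (F n)) > 0" using cFpos[of n] by simp
    have md: "real m ^ 2 * real d > 0" using mpos dpos by simp
    have "1 - E n = (real (card (F n)) - real ?S) / real (card (F n))"
      unfolding ES using cF by (simp add: diff_divide_distrib)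
    also have "\<dots> \<le> (real m ^ 2 * real d * real ?k) / real (card (F n))"
      using R1 cF by (intro divide_right_mono) auto
    also have "\<dots> = real m ^ 2 * real d * r n" unfolding r_def by simp
    finally have "1 - E n \<le> real m ^ 2 * real d * r n" .
    thus ?thesis unfolding c_def using md by (simp add: field_simps)
  qed
  have lim: "(\<lambda>n. ereal ((1 - E n) * c)) \<longlonglongrightarrow> ereal c"
  proof -
    have "(\<lambda>n. (1 - E n) * c) \<longlonglongrightarrow> (1 - 0) * c" by (intro tendsto_intros E0)
    thus ?thesis by (intro tendsto_ereal) simp
  qed
  have "ereal c = limsup (\<lambda>n. ereal ((1 - E n) * c))"
    using lim_imp_Limsup[OF trivial_limit_sequentially lim] by simp
  also have "\<dots> \<le> limsup (\<lambda>n. ereal (r n))"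
    by (rule Limsup_mono) (simp add: key)
  also have "\<dots> = commuting_ratio G F" unfolding commuting_ratio_def r_def ..
  finally show ?thesis unfolding c_def .
qed

end
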